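(* Let $d>0$, $\mu>0$, $h_0>0$, let $J$ satisfy (J) and $\int_{-\infty}^0\int_0^{+\infty}J(x-y)\,dy\,dx<+\infty$, and let $f$ satisfy (f3). Let $c_0>0$ be the speed of the unique semi-wave pair described in the context. Let $(u,g,h)$ be the unique solution of problem (P) with initial data $u_0$ as in the context, and suppose spreading happens, i.e. $\lim_{t\to\infty}h(t)=-\lim_{t\to\infty}g(t)=\infty$ and $\lim_{t\to\infty}u(t,x)=1$ locally uniformly in $x\in\mathbb{R}$. Then $$\limsup_{t\to\infty}\frac{h(t)}{t}\le c_0.$$
   Context: Condition (J): $J\in C(\mathbb{R})\cap L^\infty(\mathbb{R})$, $J\ge 0$, $J(0)>0$, $\int_{\mathbb{R}}J=1$, $J$ even. Condition (f3): $f\in C^1([0,\infty))$, $f(0)=f(1)=0$, $f>0$ in $(0,1)$, $f'(0)>0>f'(1)$, $f(u)/u$ nonincreasing in $u>0$. Semi-wave pair: under these assumptions there is exactly one pair $(c_0,\phi)$ with $c_0>0$, $\phi\in C^1((-\infty,0])$ nonnegative and nonincreasing, such that $d\int_{-\infty}^0J(x-y)\phi(y)dy-d\phi(x)+c_0\phi'(x)+f(\phi(x))=0$ for $x<0$, $\phi(-\infty)=1$, $\phi(0)=0$, and $c_0=\mu\int_{-\infty}^0\int_0^{+\infty}J(x-y)\phi(x)\,dy\,dx$ (and $\phi$ is strictly decreasing). Problem (P): $u_0\in C([-h_0,h_0])$, $u_0(\pm h_0)=0$, $u_0>0$ in $(-h_0,h_0)$; $(u,g,h)$ satisfies $u_t=d\int_{g(t)}^{h(t)}J(x-y)u(t,y)dy-du+f(u)$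 for $t>0$, $g(t)<x<h(t)$; $u(t,g(t))=u(t,h(t))=0$; $h'(t)=\mu\int_{g(t)}^{h(t)}\int_{h(t)}^{\infty}J(x-y)u(t,x)dydx$; $g'(t)=-\mu\int_{g(t)}^{h(t)}\int_{-\infty}^{g(t)}J(x-y)u(t,x)dydx$; $u(0,\cdot)=u_0$, $h(0)=-g(0)=h_0$. It has a unique global solution. *)

theory Defs
  imports "HOL-Analysis.Analysis"
begin

definition kernel_J :: "(real \<Rightarrow> real) \<Rightarrow> bool" where
  "kernel_J J \<longleftrightarrow> continuous_on UNIV J \<and> bounded (range J) \<and> (\<forall>x. J x \<ge> 0) \<and> J 0 > 0
     \<and> J integrable_on UNIV \<and> integral UNIV J = 1 \<and> (\<forall>x. J (-x) = J x)"

definition cond_f3 :: "(real \<Rightarrow> real) \<Rightarrow> bool" where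
  "cond_f3 f \<longleftrightarrow> (\<exists>f'. continuous_on {0..} f' \<and>
       (\<forall>v\<ge>0. (f has_real_derivative f' v) (at v within {0..})) \<and> f' 0 > 0 \<and> f' 1 < 0)
     \<and> f 0 = 0 \<and> f 1 = 0 \<and> (\<forall>v. 0 < v \<and> v < 1 \<longrightarrow> f v > 0)
     \<and> (\<forall>v w. 0 < v \<and> v \<le> w \<longrightarrow> f w / w \<le> f v / v)"

definition semi_wave :: "real \<Rightarrow> real \<Rightarrow> (real \<Rightarrow> real) \<Rightarrow> (real \<Rightarrow> real) \<Rightarrow> real \<Rightarrow> (real \<Rightarrow> real) \<Rightarrow> bool" where
  "semi_wave d \<mu> J f c0 \<phi> \<longleftrightarrow> c0 > 0 \<and>
     (\<exists>\<phi>'. continuous_on {..0} \<phi>' \<and> (\<forall>x\<le>0. (\<phi> has_real_derivative \<phi>' x) (at x within {..0})) \<and>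
        (\<forall>x<0. d * integral {..0} (\<lambda>y. J (x - y) * \<phi> y) - d * \<phi> x + c0 * \<phi>' x + f (\<phi> x) = 0))
     \<and> (\<forall>x\<le>0. \<phi> x \<ge> 0) \<and> (\<forall>x y. x \<le> y \<and> y \<le> 0 \<longrightarrow> \<phi> y \<le> \<phi> x)
     \<and> (\<phi> \<longlongrightarrow> 1) at_bot \<and> \<phi> 0 = 0
     \<and> c0 = \<mu> * integral {..0} (\<lambda>x. integral {0..} (\<lambda>y. J (x - y)) * \<phi> x)"

definition init_data :: "real \<Rightarrow> (real \<Rightarrow> real) \<Rightarrow> bool" where
  "init_data h0 u0 \<longleftrightarrow> continuous_on {-h0..h0} u0 \<and> u0 (-h0) = 0 \<and> u0 h0 = 0
     \<and> (\<forall>x. -h0 < x \<and> x < h0 \<longrightarrow> u0 x > 0)"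

definition solves_P :: "real \<Rightarrow> real \<Rightarrow> (real \<Rightarrow> real) \<Rightarrow> (real \<Rightarrow> real) \<Rightarrow> real \<Rightarrow> (real \<Rightarrow> real)
      \<Rightarrow> (real \<Rightarrow> real \<Rightarrow> real) \<Rightarrow> (real \<Rightarrow> real) \<Rightarrow> (real \<Rightarrow> real) \<Rightarrow> bool" where
  "solves_P d \<mu> J f h0 u0 u g h \<longleftrightarrow>
     continuous_on {0..} g \<and> continuous_on {0..} h \<and> (\<forall>t\<ge>0. g t < h t)
     \<and> continuous_on {(t, x). t \<ge> 0 \<and> g t \<le> x \<and> x \<le> h t} (\<lambda>(t, x). u t x)
     \<and> (\<forall>t>0. \<forall>x. g t < x \<and> x < h t \<longrightarrow>
          ((\<lambda>s. u s x) has_real_derivative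
             (d * integral {g t..h t} (\<lambda>y. J (x - y) * u t y) - d * u t x + f (u t x))) (at t))
     \<and> (\<forall>t\<ge>0. u t (g t) = 0 \<and> u t (h t) = 0)
     \<and> (\<forall>t>0. (h has_real_derivative
             (\<mu> * integral {g t..h t} (\<lambda>x. integral {h t..} (\<lambda>y. J (x - y)) * u t x))) (at t))
     \<and> (\<forall>t>0. (g has_real_derivative
             (- \<mu> * integral {g t..h t} (\<lambda>x. integral {..g t} (\<lambda>y. J (x - y)) * u t x))) (at t))
     \<and> (\<forall>x\<in>{-h0..h0}. u 0 x = u0 x) \<and> h 0 = h0 \<and> g 0 = - h0"

definition spreading :: "(real \<Rightarrow> real \<Rightarrow> real) \<Rightarrow> (real \<Rightarrow> real) \<Rightarrow> (real \<Rightarrow> real) \<Rightarrow> bool" where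
  "spreading u g h \<longleftrightarrow> filterlim h at_top at_top \<and> filterlim g at_bot at_top
     \<and> (\<forall>L>0. \<forall>e>0. eventually (\<lambda>t. \<forall>x\<in>{-L..L}. \<bar>u t x - 1\<bar> < e) at_top)"

end

theory Submission
  imports Defs
begin

lemma affine_int:
  fixes f :: "real \<Rightarrow> real"
  assumes f: "f absolutely_integrable_on UNIV" and c: "c \<noteq> 0"
  shows "((\<lambda>x. f (t + c * x)) has_integral (integral UNIV f / \<bar>c\<bar>)) UNIV"
    and "(\<lambda>x. f (t + c * x)) absolutely_integrable_on UNIV"
proof -
  have i: "integrable lebesgue f" using f by (simp add: set_integrable_def)
  have i2: "integrable lebesgue (\<lambda>x. f (t + c * x))"
    using lebesgue_integrable_real_affine[OF i c] .
  have e1: "integral UNIV f = integral\<^sup>L lebesgue f"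
    using has_integral_integral_lebesgue[OF i] by (simp add: integral_unique)
  have "integral\<^sup>L lebesgue f = \<bar>c\<bar> * integral\<^sup>L lebesgue (\<lambda>x. f (t + c * x))"
    using lebesgue_integral_real_affine[OF c, of f t] by simp
  then show "((\<lambda>x. f (t + c * x)) has_integral (integral UNIV f / \<bar>c\<bar>)) UNIV"
    using has_integral_integral_lebesgue[OF i2] e1 c by simp
  show "(\<lambda>x. f (t + c * x)) absolutely_integrable_on UNIV"
    using i2 by (simp add: set_integrable_def)
qed

lemma kJ_props:
  assumes "kernel_J J"
  shows "continuous_on UNIV J" "\<And>x. J x \<ge> 0" "J integrable_on UNIV" "integral UNIV J = 1"
    "\<And>x. J (-x) = J x" "J absolutely_integrable_on UNIV"
  using assms unfolding kernel_J_def by (auto intro: nonnegative_absolutely_integrable_1)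

lemma J_shift:
  assumes "kernel_J J"
  shows "(\<lambda>y. J (x - y)) absolutely_integrable_on UNIV"
    "((\<lambda>y. J (x - y)) has_integral 1) UNIV"
proof -
  have e: "(\<lambda>y. J (x + (-1) * y)) = (\<lambda>y. J (x - y))" by auto
  show "(\<lambda>y. J (x - y)) absolutely_integrable_on UNIV"
    using affine_int(2)[OF kJ_props(6)[OF assms], of "-1" x] e by simp
  show "((\<lambda>y. J (x - y)) has_integral 1) UNIV"
    using affine_int(1)[OF kJ_props(6)[OF assms], of "-1" x] e kJ_props(4)[OF assms] by simp
qed

lemma J_on:
  assumes "kernel_J J" "S \<in> sets lebesgue"
  shows "(\<lambda>y. J (x - y)) absolutely_integrable_on S"
  using set_integrable_subset[OF J_shift(1)[OF assms(1), of x] assms(2)] by simp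

lemma J_int_le1:
  assumes "kernel_J J"
  shows "integral {a..b} (\<lambda>y. J (x - y)) \<le> 1"
proof -
  have "integral {a..b} (\<lambda>y. J (x - y)) \<le> integral UNIV (\<lambda>y. J (x - y))"
  proof (rule integral_subset_le)
    show "(\<lambda>y. J (x - y)) integrable_on {a..b}"
      by (rule set_lebesgue_integral_eq_integral(1)[OF J_on[OF assms(1)]]) simp
    show "(\<lambda>y. J (x - y)) integrable_on UNIV"
      using J_shift(2)[OF assms] by blast
      show "{a..b} \<subseteq> UNIV" by simp
    show "\<forall>y\<in>UNIV. 0 \<le> J (x - y)" using kJ_props(2)[OF assms] by simp
  qed
  then show ?thesis using integral_unique[OF J_shift(2)[OF assms, of x]] by simp
qed

lemma J_int_nonneg:
  assumes "kernel_J J"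
  shows "integral S (\<lambda>y. J (x - y)) \<ge> 0"
proof (cases "(\<lambda>y. J (x - y)) integrable_on S")
  case True then show ?thesis using kJ_props(2)[OF assms] by (simp add: integral_nonneg)
qed (simp add: not_integrable_integral)

lemma shift_half:
  assumes "kernel_J J"
  shows "integral {c..} (\<lambda>y. J (x - y)) = integral {0..} (\<lambda>z. J (x - c - z))"
proof -
  define F where "F = (\<lambda>y. if y \<in> {c..} then J (x - y) else 0)"
  have "(\<lambda>y. J (x - y)) absolutely_integrable_on {c..}"
    by (rule J_on[OF assms]) simp
  then have Fa: "F absolutely_integrable_on UNIV"
    unfolding F_def absolutely_integrable_restrict_UNIV .
  have "((\<lambda>z. F (c + 1 * z)) has_integral integral UNIV F) UNIV"
    using affine_int(1)[OF Fa, of 1 c] by simp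
  moreover have "(\<lambda>z. F (c + 1 * z)) = (\<lambda>z. if z \<in> {0..} then J (x - c - z) else 0)"
    unfolding F_def by (rule ext) (simp add: algebra_simps)
  ultimately have "((\<lambda>z. if z \<in> {0..} then J (x - c - z) else 0) has_integral integral UNIV F) UNIV"
    by simp
  then have "((\<lambda>z. J (x - c - z)) has_integral integral UNIV F) {0..}"
    unfolding has_integral_restrict_UNIV .
  moreover have "integral UNIV F = integral {c..} (\<lambda>y. J (x - y))"
    unfolding F_def by (rule integral_restrict_UNIV)
  ultimately show ?thesis by (metis integral_unique)
qed

lemma f_lip:
  assumes "cond_f3 f"
  shows "\<exists>L\<ge>0. \<forall>x y. 0 \<le> x \<longrightarrow> x \<le> B \<longrightarrow> 0 \<le> y \<longrightarrow> y \<le> B \<longrightarrow> \<bar>f x - f y\<bar> \<le> L * \<bar>x - y\<bar>"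
proof -
  obtain f' where cf: "continuous_on {0..} f'" and df: "\<And>v. v \<ge> 0 \<Longrightarrow> (f has_real_derivative f' v) (at v within {0..})"
    using assms unfolding cond_f3_def by blast
  have "compact (f' ` {0..B})"
    by (rule compact_continuous_image) (auto intro: continuous_on_subset[OF cf])
  then obtain M where M: "\<And>v. v \<in> {0..B} \<Longrightarrow> norm (f' v) \<le> M"
    using compact_imp_bounded bounded_iff by (metis imageI)
  have "\<bar>f x - f y\<bar> \<le> max M 0 * \<bar>x - y\<bar>" if "x \<in> {0..B}" "y \<in> {0..B}" for x y
  proof -
    have "norm (f x - f y) \<le> max M 0 * norm (x - y)"
    proof (rule field_differentiable_bound[of "{0..B}"])
      show "convex {0..B}" by simp
      show "(f has_field_derivative f' z) (at z within {0..B})" if "z \<in> {0..B}" for z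
        using df[of z] that by (auto intro: has_field_derivative_subset)
      show "norm (f' z) \<le> max M 0" if "z \<in> {0..B}" for z using M[OF that] by simp
    qed (use that in auto)
    then show ?thesis by simp
  qed
  then show ?thesis by (intro exI[of _ "max M 0"]) auto
qed

lemma f_kpp:
  assumes "cond_f3 f" "0 < v" "v \<le> w"
  shows "f w \<le> w * (f v / v)"
proof -
  have "f w / w \<le> f v / v" using assms unfolding cond_f3_def by blast
  then show ?thesis using assms by (simp add: divide_simps mult.commute)
qed

lemma f_K:
  assumes "cond_f3 f" "0 \<le> p" "1 \<le> K"
  shows "f (K * p) \<le> K * f p"
proof (cases "p = 0")
  case True then show ?thesis using assms unfolding cond_f3_def by simp
next
  case False
  then have "f (K * p) \<le> (K * p) * (f p / p)"
    using assms by (intro f_kpp) (auto intro: mult_right_mono[of 1 K p, simplified])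
  then show ?thesis using False by simp
qed

lemma f_neg:
  assumes "cond_f3 f" "1 < v"
  shows "f v < 0"
proof -
  obtain f' where df: "\<And>v. v \<ge> 0 \<Longrightarrow> (f has_real_derivative f' v) (at v within {0..})" and f1: "f' 1 < 0"
    and z: "f 1 = 0"
    using assms unfolding cond_f3_def by blast
  have "interior {0::real..} = {0<..}" by simp
  then have "at (1::real) within {0..} = at 1" by (intro at_within_interior) simp
  then have "(f has_real_derivative f' 1) (at 1)" using df[of 1] by simp
  from DERIV_neg_dec_right[OF this f1] obtain e where e: "e > 0" "\<And>h. h > 0 \<Longrightarrow> h < e \<Longrightarrow> f (1 + h) < f 1"
    by blast
  define s where "s = min (e/2) (v - 1)"
  have s: "s > 0" "s < e" "1 + s \<le> v" using e assms by (auto simp: s_def)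
  have fs: "f (1 + s) < 0" using e(2)[OF s(1,2)] z by simp
  have "f v \<le> v * (f (1+s) / (1+s))" using f_kpp[OF assms(1), of "1+s" v] s by simp
  also have "\<dots> < 0" using fs s assms by (simp add: mult_pos_neg divide_neg_pos)
  finally show ?thesis .
qed

lemma f_cont:
  assumes "cond_f3 f"
  shows "continuous_on {0..} f"
proof -
  obtain f' where df: "\<And>v. v \<ge> 0 \<Longrightarrow> (f has_real_derivative f' v) (at v within {0..})"
    using assms unfolding cond_f3_def by blast
  show ?thesis unfolding continuous_on_eq_continuous_within
    using df by (auto intro: DERIV_continuous)
qed

locale SW =
  fixes d \<mu> :: real and J f \<phi> :: "real \<Rightarrow> real" and c0 :: real
  assumes kJ: "kernel_J J"
    and Bint: "(\<lambda>x. integral {0..} (\<lambda>y. J (x - y))) integrable_on {..0}"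
    and sw: "semi_wave d \<mu> J f c0 \<phi>"
begin

lemma c0_pos: "c0 > 0" using sw unfolding semi_wave_def by blast

lemma phi_props:
  "\<And>x. x \<le> 0 \<Longrightarrow> \<phi> x \<ge> 0" "\<And>x y. x \<le> y \<Longrightarrow> y \<le> 0 \<Longrightarrow> \<phi> y \<le> \<phi> x"
  "(\<phi> \<longlongrightarrow> 1) at_bot" "\<phi> 0 = 0"
  "c0 = \<mu> * integral {..0} (\<lambda>x. integral {0..} (\<lambda>y. J (x - y)) * \<phi> x)"
  using sw unfolding semi_wave_def by auto

definition "\<phi>' = (SOME \<phi>'. continuous_on {..0} \<phi>' \<and> (\<forall>x\<le>0. (\<phi> has_real_derivative \<phi>' x) (at x within {..0})) \<and>
        (\<forall>x<0. d * integral {..0} (\<lambda>y. J (x - y) * \<phi> y) - d * \<phi> x + c0 * \<phi>' x + f (\<phi> x) = 0))"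

lemma phi'_props: "\<And>x. x \<le> 0 \<Longrightarrow> (\<phi> has_real_derivative \<phi>' x) (at x within {..0})"
   "\<And>x. x < 0 \<Longrightarrow> d * integral {..0} (\<lambda>y. J (x - y) * \<phi> y) - d * \<phi> x + c0 * \<phi>' x + f (\<phi> x) = 0"
proof -
  have "\<exists>\<phi>'. continuous_on {..0} \<phi>' \<and> (\<forall>x\<le>0. (\<phi> has_real_derivative \<phi>' x) (at x within {..0})) \<and>
        (\<forall>x<0. d * integral {..0} (\<lambda>y. J (x - y) * \<phi> y) - d * \<phi> x + c0 * \<phi>' x + f (\<phi> x) = 0)"
    using sw unfolding semi_wave_def by blast
  from someI_ex[OF this] show "\<And>x. x \<le> 0 \<Longrightarrow> (\<phi> has_real_derivative \<phi>' x) (at x within {..0})"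
   "\<And>x. x < 0 \<Longrightarrow> d * integral {..0} (\<lambda>y. J (x - y) * \<phi> y) - d * \<phi> x + c0 * \<phi>' x + f (\<phi> x) = 0"
    unfolding \<phi>'_def by auto
qed

lemma phi_deriv_at: "x < 0 \<Longrightarrow> (\<phi> has_real_derivative \<phi>' x) (at x)"
proof -
  assume x: "x < 0"
  have "interior {..0::real} = {..<0}" by simp
  then have "at x within {..0} = at x" using x by (intro at_within_interior) simp
  then show ?thesis using phi'_props(1)[of x] x by simp
qed

lemma phi'_nonpos: "x < 0 \<Longrightarrow> \<phi>' x \<le> 0"
proof (rule ccontr)
  assume x: "x < 0" and "\<not> \<phi>' x \<le> 0"
  then have "\<phi>' x > 0" by simp
  from DERIV_pos_inc_right[OF phi_deriv_at[OF x] this] obtain e where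
    e: "e > 0" "\<And>h. h > 0 \<Longrightarrow> h < e \<Longrightarrow> \<phi> x < \<phi> (x + h)" by blast
  define h where "h = min (e/2) (-x)"
  have "h > 0" "h < e" "x + h \<le> 0" using e x by (auto simp: h_def)
  then show False using e(2)[of h] phi_props(2)[of x "x+h"] by auto
qed

lemma phi_cont: "continuous_on {..0} \<phi>"
  unfolding continuous_on_eq_continuous_within
  using phi'_props(1) by (auto intro: DERIV_continuous)

lemma phi_le1: "x \<le> 0 \<Longrightarrow> \<phi> x \<le> 1"
proof -
  assume x: "x \<le> 0"
  have "eventually (\<lambda>y. \<phi> x \<le> \<phi> y) at_bot"
    unfolding eventually_at_bot_linorder using phi_props(2) x by (intro exI[of _ x]) auto
  then show ?thesis using tendsto_lowerbound[OF phi_props(3)] by simp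
qed

lemma phi_meas: "S \<subseteq> {..0} \<Longrightarrow> S \<in> sets lebesgue \<Longrightarrow> \<phi> \<in> borel_measurable (lebesgue_on S)"
  by (rule continuous_imp_measurable_on_sets_lebesgue) (auto intro: continuous_on_subset[OF phi_cont])

lemma phi_bdd: "S \<subseteq> {..0} \<Longrightarrow> bounded (\<phi> ` S)"
proof -
  assume "S \<subseteq> {..0}"
  then have "\<forall>y\<in>\<phi> ` S. norm y \<le> 1" using phi_props(1) phi_le1 by force
  then show ?thesis unfolding bounded_iff by blast
qed

lemma I_int: "(\<lambda>y. J (x - y) * \<phi> y) absolutely_integrable_on {..0}"
proof -
  have "(\<lambda>y. \<phi> y * J (x - y)) absolutely_integrable_on {..0}"
    by (rule absolutely_integrable_bounded_measurable_product_real)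
       (auto intro: phi_meas phi_bdd J_on[OF kJ])
  then show ?thesis by (simp add: mult.commute)
qed

lemma Bphi_int: "(\<lambda>x. integral {0..} (\<lambda>y. J (x - y)) * \<phi> x) absolutely_integrable_on {..0}"
proof -
  have "(\<lambda>x. integral {0..} (\<lambda>y. J (x - y))) absolutely_integrable_on {..0}"
    using Bint J_int_nonneg[OF kJ] by (intro nonnegative_absolutely_integrable_1) auto
  then have "(\<lambda>x. \<phi> x * integral {0..} (\<lambda>y. J (x - y))) absolutely_integrable_on {..0}"
    by (intro absolutely_integrable_bounded_measurable_product_real)
       (auto intro: phi_meas phi_bdd)
  then show ?thesis by (simp add: mult.commute)
qed

end

lemma compact_region:
  fixes g h :: "real \<Rightarrow> real"
  assumes cg: "continuous_on {T0..T1} g" and ch: "continuous_on {T0..T1} h"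
    and gh: "\<And>t. t \<in> {T0..T1} \<Longrightarrow> g t \<le> h t"
  shows "compact {(t,x). T0 \<le> t \<and> t \<le> T1 \<and> g t \<le> x \<and> x \<le> h t}"
proof -
  define F where "F = (\<lambda>p::real\<times>real. (fst p, g (fst p) + snd p * (h (fst p) - g (fst p))))"
  have cF: "continuous_on ({T0..T1} \<times> {0..1}) F"
    unfolding F_def
    by (intro continuous_intros continuous_on_compose2[OF cg] continuous_on_compose2[OF ch]) auto
  have "F ` ({T0..T1} \<times> {0..1}) = {(t,x). T0 \<le> t \<and> t \<le> T1 \<and> g t \<le> x \<and> x \<le> h t}"
  proof (rule set_eqI, rule iffI)
    fix p assume "p \<in> F ` ({T0..T1} \<times> {0..1})"
    then obtain t s where ts: "t \<in> {T0..T1}" "s \<in> {0..1}" "p = F (t,s)" by auto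
    have "s * (h t - g t) \<le> 1 * (h t - g t)" using ts gh[of t] by (intro mult_right_mono) auto
    moreover have "0 \<le> s * (h t - g t)" using ts gh[of t] by auto
    ultimately show "p \<in> {(t,x). T0 \<le> t \<and> t \<le> T1 \<and> g t \<le> x \<and> x \<le> h t}"
      using ts by (auto simp: F_def)
  next
    fix p assume "p \<in> {(t,x). T0 \<le> t \<and> t \<le> T1 \<and> g t \<le> x \<and> x \<le> h t}"
    then obtain t x where p: "p = (t,x)" "T0 \<le> t" "t \<le> T1" "g t \<le> x" "x \<le> h t" by auto
    show "p \<in> F ` ({T0..T1} \<times> {0..1})"
    proof (cases "g t = h t")
      case True
      then show ?thesis using p by (intro image_eqI[of _ _ "(t,0)"]) (auto simp: F_def)
    next
      case False
      then have hg: "h t - g t > 0" using p by auto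
      define s where "s = (x - g t) / (h t - g t)"
      have "s \<in> {0..1}" using p hg by (auto simp: s_def divide_simps)
      moreover have "F (t,s) = p" using hg p by (simp add: F_def s_def)
      ultimately show ?thesis using p by (intro image_eqI[of _ _ "(t,s)"]) auto
    qed
  qed
  moreover have "compact (F ` ({T0..T1} \<times> {0..1}))"
    by (intro compact_continuous_image cF compact_Times) auto
  ultimately show ?thesis by simp
qed

lemma maxp:
  fixes g h :: "real \<Rightarrow> real" and w :: "real \<Rightarrow> real \<Rightarrow> real"
  assumes T: "T0 \<le> T1"
    and cg: "continuous_on {T0..T1} g" and ch: "continuous_on {T0..T1} h"
    and gh: "\<And>t. t \<in> {T0..T1} \<Longrightarrow> g t < h t"
    and cw: "continuous_on {(t,x). T0 \<le> t \<and> t \<le> T1 \<and> g t \<le> x \<and> x \<le> h t} (\<lambda>(t,x). w t x)"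
    and w0: "\<And>x. g T0 \<le> x \<Longrightarrow> x \<le> h T0 \<Longrightarrow> 0 \<le> w T0 x"
    and wb: "\<And>t. t \<in> {T0..T1} \<Longrightarrow> 0 \<le> w t (g t) \<and> 0 \<le> w t (h t)"
    and L: "L \<ge> 0"
    and der: "\<And>t x a. T0 < t \<Longrightarrow> t \<le> T1 \<Longrightarrow> g t < x \<Longrightarrow> x < h t \<Longrightarrow> 0 < a \<Longrightarrow> w t x = -a
       \<Longrightarrow> (\<And>y. g t \<le> y \<Longrightarrow> y \<le> h t \<Longrightarrow> -a \<le> w t y)
       \<Longrightarrow> \<exists>w'. ((\<lambda>s. w s x) has_real_derivative w') (at t) \<and> -L*a \<le> w'"
    and t: "T0 \<le> t" "t \<le> T1" "g t \<le> x" "x \<le> h t"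
  shows "0 \<le> w t x"
proof (rule ccontr)
  assume neg: "\<not> 0 \<le> w t x"
  define b where "b = - w t x"
  have b: "b > 0" using neg by (simp add: b_def)
  define M where "M = L + 1"
  define \<epsilon> where "\<epsilon> = b / (2 * exp (M * (t - T0)))"
  have \<epsilon>: "\<epsilon> > 0" using b by (simp add: \<epsilon>_def)
  define E where "E = (\<lambda>s. \<epsilon> * exp (M * (s - T0)))"
  have Epos: "\<And>s. E s > 0" using \<epsilon> by (simp add: E_def)
  define W where "W = (\<lambda>s y. w s y + E s)"
  define D where "D = {(t,x). T0 \<le> t \<and> t \<le> T1 \<and> g t \<le> x \<and> x \<le> h t}"
  have cD: "compact D" unfolding D_def
    by (rule compact_region[OF cg ch]) (use gh in \<open>auto intro: less_imp_le\<close>)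
  have cE: "continuous_on D (\<lambda>p. E (fst p))" unfolding E_def by (intro continuous_intros)
  have cW: "continuous_on D (\<lambda>p. W (fst p) (snd p))"
    unfolding W_def using continuous_on_add[OF cw[folded D_def, unfolded case_prod_unfold] cE] by simp
  define S where "S = {p \<in> D. W (fst p) (snd p) \<le> 0}"
  have clS: "closed S" unfolding S_def
    by (rule continuous_on_closed_Collect_le[OF cW continuous_on_const compact_imp_closed[OF cD]])
  have "compact (D \<inter> S)" by (rule compact_Int_closed[OF cD clS])
  moreover have "D \<inter> S = S" by (auto simp: S_def)
  ultimately have cS: "compact S" by simp
  have Et: "E t = b / 2" using b by (simp add: E_def \<epsilon>_def)
  have "(t,x) \<in> S" using t Et neg by (simp add: S_def D_def W_def b_def)
  then have neS: "fst ` S \<noteq> {}" by blast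
  have "compact (fst ` S)" by (intro compact_continuous_image continuous_intros cS)
  from compact_attains_inf[OF this neS] obtain ts where ts: "ts \<in> fst ` S" "\<And>s. s \<in> fst ` S \<Longrightarrow> ts \<le> s"
    by blast
  then obtain x1 where x1: "(ts, x1) \<in> S" by force
  have tsD: "T0 \<le> ts" "ts \<le> T1" "g ts \<le> x1" "x1 \<le> h ts" "W ts x1 \<le> 0" using x1 by (auto simp: S_def D_def)
  have "ts \<noteq> T0"
  proof
    assume "ts = T0"
    then have "W ts x1 > 0" using w0[of x1] tsD Epos[of ts] by (simp add: W_def)
    then show False using tsD by simp
  qed
  then have tsT0: "T0 < ts" using tsD by simp
  have gts: "g ts < h ts" using gh tsD by auto
  have cWt: "continuous_on {g ts..h ts} (\<lambda>y. W ts y)"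
  proof -
    have "continuous_on {g ts..h ts} ((\<lambda>p. W (fst p) (snd p)) \<circ> (\<lambda>y. (ts, y)))"
      by (rule continuous_on_compose[OF _ continuous_on_subset[OF cW]])
         (auto intro: continuous_intros simp: D_def tsD)
    then show ?thesis by (simp add: o_def)
  qed
  obtain xs where xs: "xs \<in> {g ts..h ts}" "\<And>y. y \<in> {g ts..h ts} \<Longrightarrow> W ts xs \<le> W ts y"
    using continuous_attains_inf[OF compact_Icc _ cWt] gts by fastforce
  define m where "m = W ts xs"
  have m0: "m \<le> 0" using xs(2)[of x1] tsD by (simp add: m_def)
  have "W ts (g ts) > 0" "W ts (h ts) > 0" using wb[of ts] tsD Epos[of ts] by (auto simp: W_def)
  then have xsi: "g ts < xs" "xs < h ts" using xs m0 m_def by (metis antisym_conv2 atLeastAtMost_iff not_less)+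
  obtain d1 where d1: "d1 > 0" "\<And>s. s \<in> {T0..T1} \<Longrightarrow> dist s ts < d1 \<Longrightarrow> dist (g s) (g ts) < xs - g ts"
    using cg tsD xsi unfolding continuous_on_iff by (metis atLeastAtMost_iff diff_gt_0_iff_gt)
  obtain d2 where d2: "d2 > 0" "\<And>s. s \<in> {T0..T1} \<Longrightarrow> dist s ts < d2 \<Longrightarrow> dist (h s) (h ts) < h ts - xs"
    using ch tsD xsi unfolding continuous_on_iff by (metis atLeastAtMost_iff diff_gt_0_iff_gt)
  define \<delta> where "\<delta> = min (min d1 d2) (ts - T0)"
  have \<delta>: "\<delta> > 0" using d1 d2 tsT0 by (simp add: \<delta>_def)
  have before: "W s xs > 0" if s: "ts - \<delta> < s" "s < ts" for s
  proof (rule ccontr)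
    assume "\<not> W s xs > 0"
    have sT: "s \<in> {T0..T1}" using s tsD by (auto simp: \<delta>_def)
    have "dist s ts < d1" "dist s ts < d2" using s by (auto simp: \<delta>_def dist_real_def)
    then have "g s < xs" "xs < h s" using d1(2)[OF sT] d2(2)[OF sT] by (auto simp: dist_real_def)
    then have "(s, xs) \<in> S" using sT \<open>\<not> W s xs > 0\<close> by (auto simp: S_def D_def)
    then have "ts \<le> s" using ts(2) by force
    then show False using s by simp
  qed
  define a where "a = E ts - m"
  have a: "a > 0" using Epos[of ts] m0 by (simp add: a_def)
  obtain w' where w': "((\<lambda>s. w s xs) has_real_derivative w') (at ts)" "-L*a \<le> w'"
  proof -
    have "w ts xs = -a" by (simp add: a_def m_def W_def)
    moreover have "-a \<le> w ts y" if "g ts \<le> y" "y \<le> h ts" for y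
      using xs(2)[of y] that by (simp add: a_def m_def W_def)
    ultimately show ?thesis using der[OF tsT0 tsD(2) xsi a] that by blast
  qed
  have dE: "(E has_real_derivative E ts * M) (at ts)"
    unfolding E_def by (auto intro!: derivative_eq_intros)
  have dW: "((\<lambda>s. W s xs) has_real_derivative (w' + E ts * M)) (at ts)"
    unfolding W_def by (rule DERIV_add[OF w'(1) dE])
  show False
  proof (cases "m < 0")
    case True
    have "(\<lambda>s. W s xs) \<midarrow>ts\<rightarrow> W ts xs" using DERIV_isCont[OF dW] by (simp add: isCont_def)
    from LIM_D[OF this, of "-m"] True obtain r where r: "r > 0"
      "\<And>s. s \<noteq> ts \<and> norm (s - ts) < r \<longrightarrow> norm (W s xs - W ts xs) < -m" by auto
    define s where "s = ts - min r \<delta> / 2"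
    have "s \<noteq> ts \<and> norm (s - ts) < r" using r \<delta> by (auto simp: s_def)
    then have "W s xs < 0" using r(2)[of s] by (auto simp: m_def)
    moreover have "W s xs > 0" using r \<delta> by (intro before) (auto simp: s_def)
    ultimately show False by simp
  next
    case False
    then have "m = 0" using m0 by simp
    then have "w' + E ts * M > 0" using w'(2) Epos[of ts] by (simp add: a_def M_def algebra_simps)
    from DERIV_pos_inc_left[OF dW this] obtain r where r: "r > 0"
      "\<And>hh. hh > 0 \<Longrightarrow> hh < r \<Longrightarrow> W (ts - hh) xs < W ts xs" by blast
    define hh where "hh = min r \<delta> / 2"
    have "W (ts - hh) xs < 0" using r(2)[of hh] r \<delta> \<open>m = 0\<close> by (auto simp: hh_def m_def)
    moreover have "W (ts - hh) xs > 0" using r \<delta> by (intro before) (auto simp: hh_def)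
    ultimately show False by simp
  qed
qed

lemma key:
  fixes U V :: "real \<Rightarrow> real"
  assumes kJJ: "kernel_J J" and d: "d > 0" and ab: "a \<le> b"
    and cU: "continuous_on {a..b} U" and cV: "continuous_on {a..b} V"
    and a0: "a' > 0" and ax: "V x - U x = -a'" and ay: "\<And>y. y \<in> {a..b} \<Longrightarrow> -a' \<le> V y - U y"
    and U': "U' = d * integral {a..b} (\<lambda>y. J (x - y) * U y) - d * U x + f (U x)"
    and V': "V' \<ge> d * P - d * V x + f (V x)"
    and P: "P \<ge> integral {a..b} (\<lambda>y. J (x - y) * V y)"
    and lip: "\<bar>f (V x) - f (U x)\<bar> \<le> L * a'"
  shows "V' - U' \<ge> - L * a'"
proof -
  have cJ: "continuous_on {a..b} (\<lambda>y. J (x - y))"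
    using kJ_props(1)[OF kJJ] by (intro continuous_on_compose2[OF kJ_props(1)[OF kJJ]] continuous_intros) auto
  have iU: "(\<lambda>y. J (x - y) * U y) integrable_on {a..b}"
    by (intro integrable_continuous_interval continuous_intros cJ cU)
  have iV: "(\<lambda>y. J (x - y) * V y) integrable_on {a..b}"
    by (intro integrable_continuous_interval continuous_intros cJ cV)
  have iJ: "(\<lambda>y. J (x - y)) integrable_on {a..b}"
    by (intro integrable_continuous_interval cJ)
  have "integral {a..b} (\<lambda>y. J (x - y) * V y) - integral {a..b} (\<lambda>y. J (x - y) * U y)
      = integral {a..b} (\<lambda>y. J (x - y) * (V y - U y))"
    using integral_diff[OF iV iU] by (simp add: algebra_simps)
  also have "\<dots> \<ge> integral {a..b} (\<lambda>y. J (x - y) * (-a'))"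
  proof (rule integral_le)
    show "(\<lambda>y. J (x - y) * (-a')) integrable_on {a..b}"
      using integrable_on_cmult_right[OF iJ, of "-a'"] by (simp add: mult.commute)
    show "(\<lambda>y. J (x - y) * (V y - U y)) integrable_on {a..b}"
      using integrable_diff[OF iV iU] by (simp add: right_diff_distrib)
    show "J (x - y) * (-a') \<le> J (x - y) * (V y - U y)" if "y \<in> {a..b}" for y
      using ay[OF that] kJ_props(2)[OF kJJ, of "x-y"] by (intro mult_left_mono) auto
  qed
  moreover have "integral {a..b} (\<lambda>y. J (x - y) * (-a')) = - a' * integral {a..b} (\<lambda>y. J (x - y))"
    by simp
  moreover have "- a' * integral {a..b} (\<lambda>y. J (x - y)) \<ge> -a'"
    using J_int_le1[OF kJJ, of a b x] a0 by simp
  ultimately have I: "integral {a..b} (\<lambda>y. J (x - y) * V y) - integral {a..b} (\<lambda>y. J (x - y) * U y) \<ge> -a'"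
    by linarith
  have "V' - U' \<ge> d * (integral {a..b} (\<lambda>y. J (x - y) * V y) - integral {a..b} (\<lambda>y. J (x - y) * U y))
      - d * (V x - U x) + (f (V x) - f (U x))"
  proof -
    have "d * P \<ge> d * integral {a..b} (\<lambda>y. J (x - y) * V y)" using P d by (intro mult_left_mono) auto
    then show ?thesis using V' U' by (simp add: right_diff_distrib)
  qed
  moreover have "d * (integral {a..b} (\<lambda>y. J (x - y) * V y) - integral {a..b} (\<lambda>y. J (x - y) * U y)) \<ge> d * (-a')"
    using I d by (intro mult_left_mono) auto
  moreover have "f (V x) - f (U x) \<ge> - L * a'" using lip by linarith
  moreover have "- d * (V x - U x) = d * a'" using ax by simp
  ultimately show ?thesis by (simp add: algebra_simps)
qed

locale PB = SW +
  fixes h0 :: real and u0 :: "real \<Rightarrow> real" and u :: "real \<Rightarrow> real \<Rightarrow> real" and g h :: "real \<Rightarrow> real"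
  assumes d: "d > 0" and mu: "\<mu> > 0" and h0: "h0 > 0" and f3: "cond_f3 f"
    and sol: "solves_P d \<mu> J f h0 u0 u g h"
begin

lemma cg: "continuous_on {0..} g" and ch: "continuous_on {0..} h"
  and gh: "\<And>t. t \<ge> 0 \<Longrightarrow> g t < h t"
  and cu: "continuous_on {(t, x). t \<ge> 0 \<and> g t \<le> x \<and> x \<le> h t} (\<lambda>(t, x). u t x)"
  and du: "\<And>t x. t > 0 \<Longrightarrow> g t < x \<Longrightarrow> x < h t \<Longrightarrow>
          ((\<lambda>s. u s x) has_real_derivative
             (d * integral {g t..h t} (\<lambda>y. J (x - y) * u t y) - d * u t x + f (u t x))) (at t)"
  and ub: "\<And>t. t \<ge> 0 \<Longrightarrow> u t (g t) = 0 \<and> u t (h t) = 0"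
  and dh: "\<And>t. t > 0 \<Longrightarrow> (h has_real_derivative
             (\<mu> * integral {g t..h t} (\<lambda>x. integral {h t..} (\<lambda>y. J (x - y)) * u t x))) (at t)"
  and u0: "\<And>x. x \<in> {-h0..h0} \<Longrightarrow> u 0 x = u0 x" and h00: "h 0 = h0" and g00: "g 0 = - h0"
  using sol unfolding solves_P_def by auto

definition "D T0 T1 = {(t,x). T0 \<le> t \<and> t \<le> T1 \<and> g t \<le> x \<and> x \<le> h t}"

lemma D_sub: "0 \<le> T0 \<Longrightarrow> D T0 T1 \<subseteq> {(t, x). t \<ge> 0 \<and> g t \<le> x \<and> x \<le> h t}"
  by (auto simp: D_def)

lemma cgT: "0 \<le> T0 \<Longrightarrow> continuous_on {T0..T1} g" by (rule continuous_on_subset[OF cg]) auto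
lemma chT: "0 \<le> T0 \<Longrightarrow> continuous_on {T0..T1} h" by (rule continuous_on_subset[OF ch]) auto

lemma cD: "0 \<le> T0 \<Longrightarrow> compact (D T0 T1)"
  unfolding D_def by (rule compact_region[OF cgT chT]) (simp_all, meson gh less_imp_le order_trans)

lemma u_bdd: "0 \<le> T0 \<Longrightarrow> \<exists>B. \<forall>t x. T0 \<le> t \<longrightarrow> t \<le> T1 \<longrightarrow> g t \<le> x \<longrightarrow> x \<le> h t \<longrightarrow> \<bar>u t x\<bar> \<le> B"
proof -
  assume T0: "0 \<le> T0"
  have "compact ((\<lambda>(t, x). u t x) ` D T0 T1)"
    by (intro compact_continuous_image continuous_on_subset[OF cu D_sub[OF T0]] cD[OF T0])
  then obtain B where "\<forall>y\<in>(\<lambda>(t, x). u t x) ` D T0 T1. norm y \<le> B"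
    using compact_imp_bounded bounded_iff by metis
  then show ?thesis by (intro exI[of _ B]) (auto simp: D_def)
qed

lemma cu_slice: "t \<ge> 0 \<Longrightarrow> continuous_on {g t..h t} (u t)"
proof -
  assume t: "t \<ge> 0"
  have "continuous_on {g t..h t} ((\<lambda>(t, x). u t x) \<circ> (\<lambda>y. (t, y)))"
    by (rule continuous_on_compose[OF _ continuous_on_subset[OF cu]]) (auto intro: continuous_intros simp: t)
  then show ?thesis by (simp add: o_def)
qed

lemma lip_of: "\<exists>L\<ge>0. \<forall>x y. 0 \<le> x \<longrightarrow> x \<le> B \<longrightarrow> 0 \<le> y \<longrightarrow> y \<le> B \<longrightarrow> \<bar>f x - f y\<bar> \<le> L * \<bar>x - y\<bar>"
  by (rule f_lip[OF f3])

end

context PB begin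

lemma upper:
  assumes eta: "\<eta> > 0"
  shows "\<exists>T\<ge>0. \<forall>t\<ge>T. \<forall>x. g t \<le> x \<longrightarrow> x \<le> h t \<longrightarrow> u t x \<le> 1 + 2 * \<eta>"
proof -
  obtain M0 where M0: "\<And>x. g 0 \<le> x \<Longrightarrow> x \<le> h 0 \<Longrightarrow> \<bar>u 0 x\<bar> \<le> M0"
    using u_bdd[of 0 0] by auto
  define M where "M = max M0 0"
  have M: "M \<ge> 0" "\<And>x. g 0 \<le> x \<Longrightarrow> x \<le> h 0 \<Longrightarrow> u 0 x \<le> M" using M0 by (force simp: M_def)+
  define \<beta> where "\<beta> = - f (1 + \<eta>) / (1 + \<eta>)"
  have \<beta>: "\<beta> > 0" using f_neg[OF f3, of "1+\<eta>"] eta by (simp add: \<beta>_def divide_neg_pos)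
  define V where "V = (\<lambda>s. 1 + \<eta> + M * exp (- \<beta> * s))"
  define Vd where "Vd = (\<lambda>s. - \<beta> * M * exp (- \<beta> * s))"
  have dV: "(V has_real_derivative Vd s) (at s)" for s
    unfolding V_def Vd_def by (auto intro!: derivative_eq_intros)
  have Vge: "V s \<ge> 1 + \<eta>" for s using M by (simp add: V_def)
  have V0: "s \<ge> 0 \<Longrightarrow> V s \<le> V 0" for s using M \<beta> by (simp add: V_def mult_left_le)
  have fV: "f (V s) \<le> Vd s" for s
  proof -
    have "f (V s) \<le> V s * (f (1 + \<eta>) / (1 + \<eta>))" using f_kpp[OF f3, of "1+\<eta>" "V s"] Vge[of s] eta by simp
    also have "\<dots> = - \<beta> * V s" by (simp add: \<beta>_def)
    also have "\<dots> \<le> - \<beta> * (M * exp (- \<beta> * s))" using \<beta> eta by (simp add: V_def)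
    finally show ?thesis by (simp add: Vd_def)
  qed
  have main: "u t1 x \<le> V t1" if t1: "t1 \<ge> 0" and x: "g t1 \<le> x" "x \<le> h t1" for t1 x
  proof -
    obtain Bu where Bu: "\<And>t x. 0 \<le> t \<Longrightarrow> t \<le> t1 \<Longrightarrow> g t \<le> x \<Longrightarrow> x \<le> h t \<Longrightarrow> \<bar>u t x\<bar> \<le> Bu"
      using u_bdd[of 0 t1] by auto
    define B where "B = max Bu (V 0)"
    obtain L where L: "L \<ge> 0" "\<And>x y. 0 \<le> x \<Longrightarrow> x \<le> B \<Longrightarrow> 0 \<le> y \<Longrightarrow> y \<le> B \<Longrightarrow> \<bar>f x - f y\<bar> \<le> L * \<bar>x - y\<bar>"
      using lip_of[of B] by auto
    have "0 \<le> V t1 - u t1 x"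
    proof (rule maxp[of 0 t1 g h "\<lambda>s y. V s - u s y" L])
      show "continuous_on {0..t1} g" "continuous_on {0..t1} h" by (auto intro: cgT chT)
      show "g t < h t" if "t \<in> {0..t1}" for t using gh that by auto
      have cV: "continuous_on (D 0 t1) (\<lambda>p. V (fst p))" unfolding V_def by (intro continuous_intros)
      have "continuous_on (D 0 t1) (\<lambda>p. V (fst p) - (\<lambda>(t, x). u t x) p)"
        by (intro continuous_on_diff cV continuous_on_subset[OF cu D_sub]) simp
      then show "continuous_on {(t, x). 0 \<le> t \<and> t \<le> t1 \<and> g t \<le> x \<and> x \<le> h t} (\<lambda>(s, y). V s - u s y)"
        by (simp add: D_def case_prod_unfold)
      show "0 \<le> V 0 - u 0 y" if "g 0 \<le> y" "y \<le> h 0" for y using M(2)[OF that] eta by (simp add: V_def)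
      show "0 \<le> V t - u t (g t) \<and> 0 \<le> V t - u t (h t)" if "t \<in> {0..t1}" for t
        using ub[of t] that Vge[of t] eta by auto
      show "0 \<le> L" by (rule L)
      show "\<exists>w'. ((\<lambda>s. V s - u s y) has_real_derivative w') (at t) \<and> - L * a \<le> w'"
        if tt: "0 < t" "t \<le> t1" "g t < y" "y < h t" "0 < a" "V t - u t y = - a"
          and ay: "\<And>z. g t \<le> z \<Longrightarrow> z \<le> h t \<Longrightarrow> - a \<le> V t - u t z" for t y a
      proof -
        define U' where "U' = d * integral {g t..h t} (\<lambda>z. J (y - z) * u t z) - d * u t y + f (u t y)"
        have "Vd t - U' \<ge> - L * a"
        proof (rule key[OF kJ d, where a="g t" and b="h t" and U="u t" and V="\<lambda>_. V t" and a'=a and x=y and P="V t" and f=f])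
          show "g t \<le> h t" using gh[of t] tt by simp
          show "continuous_on {g t..h t} (u t)" using cu_slice tt by simp
          show "continuous_on {g t..h t} (\<lambda>_. V t)" by simp
          show "0 < a" "V t - u t y = - a" by (rule tt)+
          show "- a \<le> V t - u t z" if "z \<in> {g t..h t}" for z using ay that by simp
          show "U' = d * integral {g t..h t} (\<lambda>z. J (y - z) * u t z) - d * u t y + f (u t y)"
            by (simp add: U'_def)
          show "d * V t - d * V t + f (V t) \<le> Vd t" using fV[of t] by simp
          have "integral {g t..h t} (\<lambda>z. J (y - z) * V t) = integral {g t..h t} (\<lambda>z. J (y - z)) * V t"
            by (rule integral_mult_left)
          also have "\<dots> \<le> 1 * V t"
            using J_int_le1[OF kJ, of "g t" "h t" y] Vge[of t] eta by (intro mult_right_mono) auto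
          finally show "integral {g t..h t} (\<lambda>z. J (y - z) * V t) \<le> V t" by simp
          have "u t y \<le> Bu" using Bu[of t y] tt by simp
          then show "\<bar>f (V t) - f (u t y)\<bar> \<le> L * a"
            using L(2)[of "V t" "u t y"] tt V0[of t] Vge[of t] eta by (simp add: B_def)
        qed
        moreover have "((\<lambda>s. V s - u s y) has_real_derivative (Vd t - U')) (at t)"
          unfolding U'_def by (intro DERIV_diff dV du tt)
        ultimately show ?thesis by blast
      qed
    qed (use t1 x in auto)
    then show ?thesis by simp
  qed
  define T where "T = M / (\<eta> * \<beta>)"
  have T: "T \<ge> 0" using M \<beta> eta by (simp add: T_def)
  have "u t x \<le> 1 + 2 * \<eta>" if t: "t \<ge> T" and x: "g t \<le> x" "x \<le> h t" for t x
  proof -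
    have "M \<le> \<eta> * \<beta> * t" using t \<beta> eta by (simp add: T_def divide_simps mult.commute)
    also have "\<dots> \<le> \<eta> * (1 + \<beta> * t)" using eta by (simp add: algebra_simps)
    also have "\<dots> \<le> \<eta> * exp (\<beta> * t)" using eta exp_ge_add_one_self[of "\<beta> * t"] by simp
    finally have "M * exp (- \<beta> * t) \<le> \<eta>" by (simp add: exp_minus divide_simps)
    then show ?thesis using main[of t x] t T x by (simp add: V_def)
  qed
  then show ?thesis using T by blast
qed

end

context PB begin

lemma u_le_super:
  assumes T: "T \<ge> 0" and t1: "T \<le> t1" and K: "K \<ge> 1" and K': "K' \<ge> 1"
    and hbdef: "\<And>s. hb s = C + K' * c0 * s"
    and hle: "\<And>s. T \<le> s \<Longrightarrow> s \<le> t1 \<Longrightarrow> h s \<le> hb s"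
    and init: "\<And>x. g T \<le> x \<Longrightarrow> x \<le> h T \<Longrightarrow> u T x \<le> K * \<phi> (x - hb T)"
    and x: "g t1 \<le> x" "x \<le> h t1"
  shows "u t1 x \<le> K * \<phi> (x - hb t1)"
proof -
  obtain Bu where Bu: "\<And>t x. T \<le> t \<Longrightarrow> t \<le> t1 \<Longrightarrow> g t \<le> x \<Longrightarrow> x \<le> h t \<Longrightarrow> \<bar>u t x\<bar> \<le> Bu"
    using u_bdd[OF T, of t1] by auto
  define B where "B = max Bu K"
  obtain L where L: "L \<ge> 0" "\<And>x y. 0 \<le> x \<Longrightarrow> x \<le> B \<Longrightarrow> 0 \<le> y \<Longrightarrow> y \<le> B \<Longrightarrow> \<bar>f x - f y\<bar> \<le> L * \<bar>x - y\<bar>"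
    using lip_of[of B] by auto
  have c0: "c0 > 0" by (rule c0_pos)
  have dhb: "(hb has_real_derivative K' * c0) (at s)" for s
    unfolding hbdef[abs_def] by (auto intro!: derivative_eq_intros)
  have chb: "continuous_on S hb" for S
    unfolding hbdef[abs_def] by (intro continuous_intros)
  have "0 \<le> K * \<phi> (x - hb t1) - u t1 x"
  proof (rule maxp[of T t1 g h "\<lambda>s y. K * \<phi> (y - hb s) - u s y" L])
    show "continuous_on {T..t1} g" "continuous_on {T..t1} h" using T by (auto intro: cgT chT)
    show "g t < h t" if "t \<in> {T..t1}" for t using gh that T by auto
    have c1: "continuous_on (D T t1) (\<lambda>p. K * \<phi> (snd p - hb (fst p)))"
    proof (intro continuous_intros continuous_on_compose2[OF phi_cont])
      show "continuous_on (D T t1) (\<lambda>x. hb (fst x))"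
        by (intro continuous_on_compose2[OF chb[of UNIV]] continuous_intros) auto
      show "(\<lambda>x. snd x - hb (fst x)) ` D T t1 \<subseteq> {..0}"
        using hle by (fastforce simp: D_def)
    qed
    have "continuous_on (D T t1) (\<lambda>p. K * \<phi> (snd p - hb (fst p)) - (\<lambda>(t, x). u t x) p)"
      by (intro continuous_on_diff c1 continuous_on_subset[OF cu D_sub[OF T]])
    then show "continuous_on {(t, x). T \<le> t \<and> t \<le> t1 \<and> g t \<le> x \<and> x \<le> h t} (\<lambda>(s, y). K * \<phi> (y - hb s) - u s y)"
      by (simp add: D_def case_prod_unfold)
    show "0 \<le> K * \<phi> (y - hb T) - u T y" if "g T \<le> y" "y \<le> h T" for y using init[OF that] by simp
    show "0 \<le> K * \<phi> (g t - hb t) - u t (g t) \<and> 0 \<le> K * \<phi> (h t - hb t) - u t (h t)" if "t \<in> {T..t1}" for t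
    proof -
      have "g t - hb t \<le> 0" "h t - hb t \<le> 0" using hle[of t] gh[of t] that T by auto
      then show ?thesis using ub[of t] that T phi_props(1) K by auto
    qed
    show "0 \<le> L" by (rule L)
    show "\<exists>w'. ((\<lambda>s. K * \<phi> (y - hb s) - u s y) has_real_derivative w') (at t) \<and> - L * a \<le> w'"
      if tt: "T < t" "t \<le> t1" "g t < y" "y < h t" "0 < a" "K * \<phi> (y - hb t) - u t y = - a"
        and ay: "\<And>z. g t \<le> z \<Longrightarrow> z \<le> h t \<Longrightarrow> - a \<le> K * \<phi> (z - hb t) - u t z" for t y a
    proof -
      define \<xi> where "\<xi> = y - hb t"
      have hlt: "h t \<le> hb t" using hle tt by auto
      have \<xi>: "\<xi> < 0" using tt hlt by (simp add: \<xi>_def)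
      define U' where "U' = d * integral {g t..h t} (\<lambda>z. J (y - z) * u t z) - d * u t y + f (u t y)"
      define I where "I = integral {..0} (\<lambda>z. J (\<xi> - z) * \<phi> z)"
      define V' where "V' = K * (\<phi>' \<xi> * (- (K' * c0)))"
      have dV: "((\<lambda>s. K * \<phi> (y - hb s)) has_real_derivative V') (at t)"
      proof -
        have "((\<lambda>s. y - hb s) has_real_derivative (- (K' * c0))) (at t)"
          using DERIV_diff[OF DERIV_const dhb] by simp
        from DERIV_chain2[OF phi_deriv_at[of "y - hb t"] this] \<xi>
        have "((\<lambda>s. \<phi> (y - hb s)) has_real_derivative \<phi>' \<xi> * (- (K' * c0))) (at t)"
          by (simp add: \<xi>_def)
        then show ?thesis unfolding V'_def by (rule DERIV_cmult)
      qed
      have "V' - U' \<ge> - L * a"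
      proof (rule key[OF kJ d, where a="g t" and b="h t" and U="u t" and V="\<lambda>z. K * \<phi> (z - hb t)"
            and a'=a and x=y and P="K * I" and f=f])
        show "g t \<le> h t" using gh[of t] tt T by simp
        show "continuous_on {g t..h t} (u t)" using cu_slice tt T by simp
        show "continuous_on {g t..h t} (\<lambda>z. K * \<phi> (z - hb t))"
          using hlt by (intro continuous_intros continuous_on_compose2[OF phi_cont]) auto
        show "0 < a" "K * \<phi> (y - hb t) - u t y = - a" by (rule tt)+
        show "- a \<le> K * \<phi> (z - hb t) - u t z" if "z \<in> {g t..h t}" for z using ay that by simp
        show "U' = d * integral {g t..h t} (\<lambda>z. J (y - z) * u t z) - d * u t y + f (u t y)"
          by (simp add: U'_def)
        show "d * (K * I) - d * (K * \<phi> (y - hb t)) + f (K * \<phi> (y - hb t)) \<le> V'"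
        proof -
          have sw: "d * I - d * \<phi> \<xi> + c0 * \<phi>' \<xi> + f (\<phi> \<xi>) = 0"
            using phi'_props(2)[OF \<xi>] by (simp add: I_def)
          have fk: "f (K * \<phi> \<xi>) \<le> K * f (\<phi> \<xi>)" using f_K[OF f3 _ K] phi_props(1) \<xi> by simp
          have "\<phi>' \<xi> \<le> 0" by (rule phi'_nonpos[OF \<xi>])
          then have "K * c0 * \<phi>' \<xi> * (K' - 1) \<le> 0" using K K' c0
          proof -
            have "K * c0 * (K' - 1) \<ge> 0" using K K' c0 by simp
            then have "(K * c0 * (K' - 1)) * \<phi>' \<xi> \<le> 0" using \<open>\<phi>' \<xi> \<le> 0\<close> by (rule mult_nonneg_nonpos)
            then show ?thesis by (simp add: algebra_simps)
          qed
          then have "- K * c0 * \<phi>' \<xi> \<le> V'" by (simp add: V'_def algebra_simps)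
          moreover have "d * (K * I) - d * (K * \<phi> \<xi>) + K * f (\<phi> \<xi>) = - K * c0 * \<phi>' \<xi>"
          proof -
            have e: "d * I - d * \<phi> \<xi> + f (\<phi> \<xi>) = - (c0 * \<phi>' \<xi>)" using sw by linarith
            have "d * (K * I) - d * (K * \<phi> \<xi>) + K * f (\<phi> \<xi>) = K * (d * I - d * \<phi> \<xi> + f (\<phi> \<xi>))"
              by (simp add: algebra_simps)
            also have "\<dots> = - K * c0 * \<phi>' \<xi>" unfolding e by simp
            finally show ?thesis .
          qed
          ultimately show ?thesis using fk by (simp add: \<xi>_def)
        qed
        show "integral {g t..h t} (\<lambda>z. J (y - z) * (K * \<phi> (z - hb t))) \<le> K * I"
        proof -
          have "integral {g t..h t} (\<lambda>z. J (y - z) * (K * \<phi> (z - hb t)))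
              = K * integral {g t..h t} (\<lambda>z. J (y - z) * \<phi> (z - hb t))"
            by (simp add: algebra_simps)
          also have "integral {g t..h t} (\<lambda>z. J (y - z) * \<phi> (z - hb t))
              = integral {g t - hb t..h t - hb t} (\<lambda>z. J (\<xi> - z) * \<phi> z)"
            using integral_shift_real_ivl[of "g t" "hb t" "h t" "\<lambda>z. J (y - z) * \<phi> (z - hb t)"]
            by (simp add: \<xi>_def algebra_simps)
          also have "\<dots> \<le> I" unfolding I_def
          proof (rule integral_subset_le)
            show "{g t - hb t..h t - hb t} \<subseteq> {..0}" using hlt by auto
            show "(\<lambda>z. J (\<xi> - z) * \<phi> z) integrable_on {..0}"
              using I_int set_lebesgue_integral_eq_integral(1) by blast
            show "(\<lambda>z. J (\<xi> - z) * \<phi> z) integrable_on {g t - hb t..h t - hb t}"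
              using hlt by (intro set_lebesgue_integral_eq_integral(1) set_integrable_subset[OF I_int]) auto
            show "\<forall>z\<in>{..0}. 0 \<le> J (\<xi> - z) * \<phi> z" using kJ_props(2)[OF kJ] phi_props(1) by simp
          qed
          finally show ?thesis using K by simp
        qed
        have "u t y \<le> Bu" using Bu[of t y] tt by simp
        moreover have "0 \<le> \<phi> (y - hb t)" "\<phi> (y - hb t) \<le> 1" using phi_props(1) phi_le1 \<xi> by (simp_all add: \<xi>_def)
        moreover have "K * \<phi> (y - hb t) \<le> K" using calculation K by simp
        moreover have "0 \<le> K * \<phi> (y - hb t)" using calculation K by simp
        moreover have "0 \<le> u t y" using calculation tt by linarith
        ultimately show "\<bar>f (K * \<phi> (y - hb t)) - f (u t y)\<bar> \<le> L * a"
          using L(2)[of "K * \<phi> (y - hb t)" "u t y"] tt K by (simp add: B_def)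
      qed
      moreover have "((\<lambda>s. K * \<phi> (y - hb s) - u s y) has_real_derivative (V' - U')) (at t)"
        unfolding U'_def using tt T by (intro DERIV_diff dV du) auto
      ultimately show ?thesis by blast
    qed
  qed (use T t1 x in auto)
  then show ?thesis by simp
qed

end

context PB begin

lemma flux_bound:
  assumes t1: "t1 \<ge> 0" and K: "K \<ge> 0"
    and le: "\<And>x. g t1 \<le> x \<Longrightarrow> x \<le> h t1 \<Longrightarrow> u t1 x \<le> K * \<phi> (x - h t1)"
  shows "\<mu> * integral {g t1..h t1} (\<lambda>x. integral {h t1..} (\<lambda>y. J (x - y)) * u t1 x) \<le> K * c0"
proof -
  define G where "G = g t1"
  define H where "H = h t1"
  have GH: "G < H" using gh[OF t1] by (simp add: G_def H_def)
  define Bf where "Bf = (\<lambda>\<xi>. integral {0..} (\<lambda>y. J (\<xi> - y)))"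
  have Bf0: "Bf \<xi> \<ge> 0" for \<xi> unfolding Bf_def by (rule J_int_nonneg[OF kJ])
  have A: "integral {H..} (\<lambda>y. J (x - y)) = Bf (x - H)" for x
    unfolding Bf_def by (rule shift_half[OF kJ])
  have BfA: "Bf absolutely_integrable_on {..0}"
    using Bint Bf0 unfolding Bf_def by (intro nonnegative_absolutely_integrable_1) auto
  have BfI: "Bf absolutely_integrable_on {G-H..0}"
    by (rule set_integrable_subset[OF BfA]) simp_all
  have e1: "integral {G..H} (\<lambda>x. integral {H..} (\<lambda>y. J (x - y)) * u t1 x)
      = integral {G-H..0} (\<lambda>\<xi>. Bf \<xi> * u t1 (\<xi> + H))"
    using integral_shift_real_ivl[of G H H "\<lambda>x. Bf (x - H) * u t1 x"] by (simp add: A)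
  have cuH: "continuous_on {G-H..0} (\<lambda>\<xi>. u t1 (\<xi> + H))"
  proof (rule continuous_on_compose2[OF cu_slice[OF t1]])
    show "continuous_on {G - H..0} (\<lambda>\<xi>. \<xi> + H)" by (intro continuous_intros)
    show "(\<lambda>\<xi>. \<xi> + H) ` {G - H..0} \<subseteq> {g t1..h t1}" by (auto simp: G_def H_def)
  qed
  have int1: "(\<lambda>\<xi>. Bf \<xi> * u t1 (\<xi> + H)) integrable_on {G-H..0}"
  proof -
    have "bounded ((\<lambda>\<xi>. u t1 (\<xi> + H)) ` {G-H..0})"
      by (intro compact_imp_bounded compact_continuous_image cuH) auto
    then have "(\<lambda>\<xi>. u t1 (\<xi> + H) * Bf \<xi>) absolutely_integrable_on {G-H..0}"
      by (intro absolutely_integrable_bounded_measurable_product_real BfI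
          continuous_imp_measurable_on_sets_lebesgue cuH) simp_all
    then show ?thesis using set_lebesgue_integral_eq_integral(1) by (simp add: mult.commute)
  qed
  have BphiA: "(\<lambda>\<xi>. Bf \<xi> * \<phi> \<xi>) absolutely_integrable_on {..0}"
    using Bphi_int by (simp add: Bf_def)
  have BphiI: "(\<lambda>\<xi>. Bf \<xi> * \<phi> \<xi>) absolutely_integrable_on {G-H..0}"
    by (rule set_integrable_subset[OF BphiA]) simp_all
  have int2: "(\<lambda>\<xi>. Bf \<xi> * (K * \<phi> \<xi>)) integrable_on {G-H..0}"
    using integrable_on_mult_right[OF set_lebesgue_integral_eq_integral(1)[OF BphiI], of K]
    by (simp add: algebra_simps)
  have int3: "(\<lambda>\<xi>. Bf \<xi> * (K * \<phi> \<xi>)) integrable_on {..0}"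
    using integrable_on_mult_right[OF set_lebesgue_integral_eq_integral(1)[OF BphiA], of K]
    by (simp add: algebra_simps)
  have "integral {G-H..0} (\<lambda>\<xi>. Bf \<xi> * u t1 (\<xi> + H)) \<le> integral {G-H..0} (\<lambda>\<xi>. Bf \<xi> * (K * \<phi> \<xi>))"
  proof (rule integral_le[OF int1 int2])
    fix \<xi> assume "\<xi> \<in> {G-H..0}"
    then have "u t1 (\<xi> + H) \<le> K * \<phi> \<xi>" using le[of "\<xi> + H"] by (simp add: G_def H_def)
    then show "Bf \<xi> * u t1 (\<xi> + H) \<le> Bf \<xi> * (K * \<phi> \<xi>)" using Bf0 by (intro mult_left_mono) auto
  qed
  also have "\<dots> \<le> integral {..0} (\<lambda>\<xi>. Bf \<xi> * (K * \<phi> \<xi>))"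
    by (rule integral_subset_le[OF _ int2 int3]) (use Bf0 K phi_props(1) in auto)
  also have "\<dots> = K * (c0 / \<mu>)"
  proof -
    have "integral {..0} (\<lambda>\<xi>. Bf \<xi> * (K * \<phi> \<xi>)) = K * integral {..0} (\<lambda>\<xi>. Bf \<xi> * \<phi> \<xi>)"
      by (simp add: algebra_simps)
    moreover have "integral {..0} (\<lambda>\<xi>. Bf \<xi> * \<phi> \<xi>) = c0 / \<mu>"
      using phi_props(5) mu by (simp add: Bf_def)
    ultimately show ?thesis by simp
  qed
  finally have "integral {G..H} (\<lambda>x. integral {H..} (\<lambda>y. J (x - y)) * u t1 x) \<le> K * (c0 / \<mu>)"
    using e1 by simp
  then have "\<mu> * integral {G..H} (\<lambda>x. integral {H..} (\<lambda>y. J (x - y)) * u t1 x) \<le> \<mu> * (K * (c0 / \<mu>))"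
    using mu by (intro mult_left_mono) auto
  then show ?thesis using mu by (simp add: G_def H_def)
qed

end

context PB begin

lemma front:
  assumes eta: "\<eta> > 0"
  shows "\<exists>T C. \<forall>t\<ge>T. h t < C + (1 + 4 * \<eta>) * c0 * t"
proof -
  obtain T where T: "T \<ge> 0" "\<And>t x. t \<ge> T \<Longrightarrow> g t \<le> x \<Longrightarrow> x \<le> h t \<Longrightarrow> u t x \<le> 1 + 2 * \<eta>"
    using upper[OF eta] by blast
  define K where "K = 1 + 3 * \<eta>"
  define K' where "K' = 1 + 4 * \<eta>"
  have K: "K \<ge> 1" "K' \<ge> 1" "K < K'" using eta by (auto simp: K_def K'_def)
  have c0: "c0 > 0" by (rule c0_pos)
  define q where "q = (1 + 2 * \<eta>) / K"
  have q: "q < 1" using eta by (simp add: q_def K_def)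
  have "eventually (\<lambda>y. q < \<phi> y) at_bot" by (rule order_tendstoD(1)[OF phi_props(3) q])
  then obtain N where N: "\<And>y. y \<le> N \<Longrightarrow> q < \<phi> y" unfolding eventually_at_bot_linorder by blast
  define R0 where "R0 = min N 0"
  define C where "C = h T - R0 + 1 - K' * c0 * T"
  define hb where "hb = (\<lambda>s. C + K' * c0 * s)"
  have hbT: "hb T = h T - R0 + 1" by (simp add: hb_def C_def)
  have init: "u T x \<le> K * \<phi> (x - hb T)" if "g T \<le> x" "x \<le> h T" for x
  proof -
    have "x - hb T \<le> N" using that hbT by (simp add: R0_def)
    then have "q < \<phi> (x - hb T)" by (rule N)
    then have "K * q \<le> K * \<phi> (x - hb T)" using K by simp
    moreover have "K * q = 1 + 2 * \<eta>" using K by (simp add: q_def)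
    ultimately show ?thesis using T(2)[of T x] that by simp
  qed
  have chb: "continuous_on S hb" for S unfolding hb_def by (intro continuous_intros)
  have dhb: "(hb has_real_derivative K' * c0) (at s)" for s
    unfolding hb_def by (auto intro!: derivative_eq_intros)
  have claim: "h t < hb t" if t: "t \<ge> T" for t
  proof (rule ccontr)
    assume "\<not> h t < hb t"
    define S where "S = {s \<in> {T..}. hb s \<le> h s}"
    have tS: "t \<in> S" using t \<open>\<not> h t < hb t\<close> by (simp add: S_def)
    have clS: "closed S" unfolding S_def
      by (rule continuous_on_closed_Collect_le[OF chb continuous_on_subset[OF ch]]) (use T in auto)
    have bS: "bdd_below S" unfolding S_def by (rule bdd_belowI[of _ T]) auto
    define t1 where "t1 = Inf S"
    have t1S: "t1 \<in> S" unfolding t1_def using closed_contains_Inf[OF _ bS clS] tS by blast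
    have t1le: "t1 \<le> s" if "s \<in> S" for s unfolding t1_def by (rule cInf_lower[OF that bS])
    have t1T: "T \<le> t1" using t1S by (simp add: S_def)
    have hbTgt: "h T < hb T" using hbT by (simp add: R0_def)
    have "t1 \<noteq> T" using t1S hbTgt by (auto simp: S_def)
    then have t1T': "T < t1" using t1T by simp
    have before: "h s < hb s" if "T \<le> s" "s < t1" for s
    proof (rule ccontr)
      assume "\<not> h s < hb s"
      then have "s \<in> S" using that by (simp add: S_def)
      then show False using t1le[of s] that by simp
    qed
    have eq: "h t1 = hb t1"
    proof (rule ccontr)
      assume ne: "h t1 \<noteq> hb t1"
      then have gt: "h t1 > hb t1" using t1S by (simp add: S_def)
      have "\<exists>s. T \<le> s \<and> s \<le> t1 \<and> (\<lambda>s. h s - hb s) s = 0"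
        by (rule IVT') (use hbTgt gt t1T T in \<open>auto intro!: continuous_intros continuous_on_subset[OF ch] chb\<close>)
      then obtain s where s: "T \<le> s" "s \<le> t1" "h s = hb s" by auto
      then have "s \<in> S" by (simp add: S_def)
      then have "s = t1" using t1le[of s] s by simp
      then show False using s ne by simp
    qed
    have hle: "h s \<le> hb s" if "T \<le> s" "s \<le> t1" for s
      using before[of s] that eq by (cases "s = t1") auto
    have cmp: "u t1 x \<le> K * \<phi> (x - h t1)" if "g t1 \<le> x" "x \<le> h t1" for x
      using u_le_super[OF T(1) t1T K(1) K(2), of hb C, OF _ hle init that] eq
      by (simp add: hb_def)
    define Hd where "Hd = \<mu> * integral {g t1..h t1} (\<lambda>x. integral {h t1..} (\<lambda>y. J (x - y)) * u t1 x)"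
    have Hd: "Hd \<le> K * c0" unfolding Hd_def using flux_bound[of t1 K] cmp t1T T K by simp
    have dH: "((\<lambda>s. h s - hb s) has_real_derivative (Hd - K' * c0)) (at t1)"
      unfolding Hd_def using t1T' T by (intro DERIV_diff dh dhb) simp
    have "Hd - K' * c0 < 0" using Hd K c0 by (smt (verit) mult_strict_right_mono)
    from DERIV_neg_dec_left[OF dH this] obtain r where
      r: "r > 0" "\<And>hh. hh > 0 \<Longrightarrow> hh < r \<Longrightarrow> h t1 - hb t1 < h (t1 - hh) - hb (t1 - hh)" by blast
    define hh where "hh = min r (t1 - T) / 2"
    have "h t1 - hb t1 < h (t1 - hh) - hb (t1 - hh)" using r t1T' by (intro r(2)) (auto simp: hh_def)
    moreover have "h (t1 - hh) < hb (t1 - hh)"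
    proof (rule before)
      have "min r (t1 - T) \<le> t1 - T" by simp
      moreover have "min r (t1 - T) > 0" using r t1T' by simp
      ultimately show "T \<le> t1 - hh" unfolding hh_def by argo
      show "t1 - hh < t1" using r t1T' by (simp add: hh_def)
    qed
    ultimately show False using eq by simp
  qed
  show ?thesis
    by (rule exI[of _ T], rule exI[of _ C]) (use claim in \<open>auto simp: hb_def K'_def\<close>)
qed

end

theorem lemma3p1:
  fixes d \<mu> h0 c0 :: real and J f u0 \<phi> g h :: "real \<Rightarrow> real" and u :: "real \<Rightarrow> real \<Rightarrow> real"
  assumes "d > 0" "\<mu> > 0" "h0 > 0"
    and "kernel_J J"
    and "(\<lambda>x. integral {0..} (\<lambda>y. J (x - y))) integrable_on {..0}"
    and "cond_f3 f"
    and "semi_wave d \<mu> J f c0 \<phi>"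
    and "init_data h0 u0"
    and "solves_P d \<mu> J f h0 u0 u g h"
    and "spreading u g h"
  shows "Limsup at_top (\<lambda>t. ereal (h t / t)) \<le> ereal c0"
proof -
  interpret PB d \<mu> J f \<phi> c0 h0 u0 u g h
    using assms by unfold_locales auto
  have c0: "c0 > 0" by (rule c0_pos)
  have bound: "Limsup at_top (\<lambda>t. ereal (h t / t)) \<le> ereal ((1 + 5 * \<eta>) * c0)" if eta: "\<eta> > 0" for \<eta>
  proof (rule Limsup_bounded)
    obtain T C where TC: "\<And>t. t \<ge> T \<Longrightarrow> h t < C + (1 + 4 * \<eta>) * c0 * t"
      using front[OF eta] by blast
    define T' where "T' = max (max T 1) (\<bar>C\<bar> / (\<eta> * c0))"
    have "ereal (h t / t) \<le> ereal ((1 + 5 * \<eta>) * c0)" if t: "t \<ge> T'" for t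
    proof -
      have t1: "t \<ge> 1" "t \<ge> T" "t \<ge> \<bar>C\<bar> / (\<eta> * c0)" using t by (auto simp: T'_def)
      have "\<bar>C\<bar> \<le> \<eta> * c0 * t" using t1(3) eta c0 by (simp add: divide_simps mult.commute)
      then have "h t < \<eta> * c0 * t + (1 + 4 * \<eta>) * c0 * t" using TC[OF t1(2)] by linarith
      also have "\<dots> = ((1 + 5 * \<eta>) * c0) * t" by (simp add: algebra_simps)
      finally have "h t / t < (1 + 5 * \<eta>) * c0" using t1(1) by (simp add: divide_simps)
      then show ?thesis by simp
    qed
    then show "eventually (\<lambda>t. ereal (h t / t) \<le> ereal ((1 + 5 * \<eta>) * c0)) at_top"
      unfolding eventually_at_top_linorder by blast
  qed
  show ?thesis
  proof (rule ereal_le_epsilon2)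
    fix e :: real assume e: "e > 0"
    define \<eta> where "\<eta> = e / (5 * c0)"
    have eta: "\<eta> > 0" using e c0 by (simp add: \<eta>_def)
    have "(1 + 5 * \<eta>) * c0 = c0 + e" using c0 by (simp add: \<eta>_def algebra_simps)
    then show "Limsup at_top (\<lambda>t. ereal (h t / t)) \<le> ereal c0 + ereal e"
      using bound[OF eta] by simp
  qed
qed

end
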